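(* Let $r,s,t,u,v$ be non-negative integers with $r+s\ge 1$ and $u+v=4t-2r+4$. Let $G=(r,\,r+s-1,\,t,\,t,\,s+t,\,u)$ and $H=(r,\,r+s-1,\,t,\,t,\,s+t,\,v)$, with interesting factors $g(x)$ and $h(x)$ respectively. Then $$g(x)=-h(-x+2s+6t+4).$$
   Context: All graphs are finite and simple. For integers $1\le j\le k$, a $(j,k)$-biclique is a graph whose vertex set is the disjoint union of a $j$-clique and a $k$-clique, with an arbitrary set of additional edges each joining a vertex of the $j$-clique to a vertex of the $k$-clique. For non-negative integers $a,b,c,d,e,f$, the notation $(a,b,c,d,e,f)$ denotes the $(3,k)$-biclique with $k=a+b+c+d+e+f$, whose $3$-clique is $\{v_1,v_2,v_3\}$, in which every vertex of the $k$-clique is adjacent to exactly one or exactly two of $v_1,v_2,v_3$, and exactly $a$ (resp. $b$, $c$) vertices of the $k$-clique are adjacent to $v_1$ only (resp. $v_2$ only, $v_3$ only), and exactly $d$ (resp. $e$, $f$) vertices of the $k$-clique are adjacent to exactly $v_2$ and $v_3$ (resp. exactly $v_1$ and $v_3$, exactly $v_1$ and $v_2$). This determines the graph up to isomorphism. The interesting factor of a $(3,k)$-biclique $G$ is the cubic polynomial $P_G(x)/(x)_k$, where $P_G$ is the chromatic polynomial and $(x)_k=x(x-1)\cdots(x-k+1)$. *)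

theory Defs
  imports "HOL-Library.FuncSet" "HOL-Computational_Algebra.Polynomial"
begin

text \<open>A finite simple graph is given by a finite vertex set V and a symmetric,
irreflexive adjacency relation adj.\<close>

definition num_colorings :: "nat set \<Rightarrow> (nat \<Rightarrow> nat \<Rightarrow> bool) \<Rightarrow> nat \<Rightarrow> nat" where
  "num_colorings V adj n =
     card {c \<in> V \<rightarrow>\<^sub>E {0..<n}. \<forall>x\<in>V. \<forall>y\<in>V. adj x y \<longrightarrow> c x \<noteq> c y}"

definition chrom_poly :: "nat set \<Rightarrow> (nat \<Rightarrow> nat \<Rightarrow> bool) \<Rightarrow> real poly" where
  "chrom_poly V adj = (THE p. \<forall>n::nat. poly p (real n) = real (num_colorings V adj n))"

definition falling_poly :: "nat \<Rightarrow> real poly" where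
  "falling_poly k = (\<Prod>i<k. [:- real i, 1:])"

text \<open>Vertices 0,1,2 are
v1,v2,v3 (the 3-clique); vertices 3..k+2 form the k-clique. The clique vertex 3+i
is adjacent to the following subset of {0,1,2}: the first a to {v1}, the next b to
{v2}, the next c to {v3}, the next d to {v2,v3}, the next e to {v1,v3}, the last f
to {v1,v2}.\<close>

definition bic_nbrs :: "nat \<Rightarrow> nat \<Rightarrow> nat \<Rightarrow> nat \<Rightarrow> nat \<Rightarrow> nat \<Rightarrow> nat \<Rightarrow> nat set" where
  "bic_nbrs a b c d e f i =
     (if i < a then {0}
      else if i < a+b then {1}
      else if i < a+b+c then {2}
      else if i < a+b+c+d then {1,2}
      else if i < a+b+c+d+e then {0,2}
      else {0,1})"

definition bic_verts :: "nat \<Rightarrow> nat \<Rightarrow> nat \<Rightarrow> nat \<Rightarrow> nat \<Rightarrow> nat \<Rightarrow> nat set" where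
  "bic_verts a b c d e f = {0..<a+b+c+d+e+f+3}"

definition bic_adj :: "nat \<Rightarrow> nat \<Rightarrow> nat \<Rightarrow> nat \<Rightarrow> nat \<Rightarrow> nat \<Rightarrow> nat \<Rightarrow> nat \<Rightarrow> bool" where
  "bic_adj a b c d e f x y =
     (x \<noteq> y \<and>
      ((x < 3 \<and> y < 3) \<or> (3 \<le> x \<and> 3 \<le> y) \<or>
       (x < 3 \<and> 3 \<le> y \<and> x \<in> bic_nbrs a b c d e f (y - 3)) \<or>
       (y < 3 \<and> 3 \<le> x \<and> y \<in> bic_nbrs a b c d e f (x - 3))))"

definition interesting_factor :: "nat \<Rightarrow> nat \<Rightarrow> nat \<Rightarrow> nat \<Rightarrow> nat \<Rightarrow> nat \<Rightarrow> real poly" where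
  "interesting_factor a b c d e f =
     chrom_poly (bic_verts a b c d e f) (bic_adj a b c d e f)
       div falling_poly (a+b+c+d+e+f)"

end

theory Submission imports Defs begin

lemma card_pairs:
  assumes "finite B" "finite C"
  shows "int (card {(q,w). q\<in>B \<and> w\<in>C \<and> q\<noteq>w}) = int (card B) * int (card C) - int (card (B\<inter>C))"
proof -
  have eq: "{(q,w). q\<in>B \<and> w\<in>C \<and> q\<noteq>w} = B \<times> C - (\<lambda>q. (q,q)) ` (B\<inter>C)" by auto
  have sub: "(\<lambda>q. (q,q)) ` (B\<inter>C) \<subseteq> B \<times> C" by auto
  have fin: "finite (B \<times> C)" using assms by simp
  have ci: "card ((\<lambda>q. (q,q)) ` (B\<inter>C)) = card (B\<inter>C)" by (rule card_image) (auto intro: inj_onI)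
  have le: "card (B\<inter>C) \<le> card B * card C"
    using card_mono[OF fin sub] ci assms by (simp add: card_cartesian_product)
  show ?thesis unfolding eq
    using card_Diff_subset[OF finite_subset[OF sub fin] sub] ci le assms
    by (simp add: card_cartesian_product of_nat_diff)
qed

lemma sum_bool_card:
  assumes "finite A"
  shows "(\<Sum>p\<in>A. (if p \<in> B then 1 else 0 :: int)) = int (card (A \<inter> B))"
  using sum.inter_restrict[OF assms, of "\<lambda>_. 1::int" B] by simp

lemma sum_bool_card2:
  assumes "finite A"
  shows "(\<Sum>p\<in>A. (if p \<in> B \<and> p \<in> C then 1 else 0 :: int)) = int (card (A \<inter> (B \<inter> C)))"
  using sum_bool_card[OF assms, of "B \<inter> C"] by simp

lemma card_minus1: "finite B \<Longrightarrow> int (card (B - {p})) = int (card B) - (if p \<in> B then 1 else 0)"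
proof (cases "p \<in> B")
  case True
  assume "finite B"
  then have "card B > 0" using True card_gt_0_iff by blast
  then show ?thesis using True by (simp add: card_Diff_singleton_if of_nat_diff)
qed simp

lemma card_triples:
  assumes "finite A" "finite B" "finite C"
  shows "int (card {(p,q,w). p\<in>A \<and> q\<in>B \<and> w\<in>C \<and> p\<noteq>q \<and> p\<noteq>w \<and> q\<noteq>w}) =
    int (card A) * int (card B) * int (card C) - int (card (A\<inter>B)) * int (card C)
    - int (card (A\<inter>C)) * int (card B) - int (card (B\<inter>C)) * int (card A) + 2 * int (card (A\<inter>B\<inter>C))"
proof -
  let ?P = "\<lambda>p. {(q,w). q\<in>B-{p} \<and> w\<in>C-{p} \<and> q\<noteq>w}"
  have eq: "{(p,q,w). p\<in>A \<and> q\<in>B \<and> w\<in>C \<and> p\<noteq>q \<and> p\<noteq>w \<and> q\<noteq>w} = Sigma A ?P" by auto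
  have fin: "finite (?P p)" for p
    by (rule finite_subset[of _ "B \<times> C"]) (use assms in auto)
  have "int (card (Sigma A ?P)) = (\<Sum>p\<in>A. int (card (?P p)))"
    using assms fin by simp
  also have "\<dots> = (\<Sum>p\<in>A. int (card B) * int (card C) - int (card (B\<inter>C))
      - int (card B) * (if p\<in>C then 1 else 0) - int (card C) * (if p\<in>B then 1 else 0)
      + 2 * (if p \<in> B\<inter>C then 1 else 0))"
  proof (rule sum.cong[OF refl])
    fix p assume "p\<in>A"
    have i: "(B-{p}) \<inter> (C-{p}) = B\<inter>C - {p}" by auto
    show "int (card (?P p)) = int (card B) * int (card C) - int (card (B\<inter>C))
      - int (card B) * (if p\<in>C then 1 else 0) - int (card C) * (if p\<in>B then 1 else 0)
      + 2 * (if p \<in> B\<inter>C then 1 else 0)"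
      using card_pairs[of "B-{p}" "C-{p}"] assms card_minus1[of B p] card_minus1[of C p]
        card_minus1[of "B\<inter>C" p]
      unfolding i by (auto simp: algebra_simps)
  qed
  also have "\<dots> = int (card A) * (int (card B) * int (card C) - int (card (B\<inter>C)))
      - int (card B) * int (card (A \<inter> C)) - int (card C) * int (card (A \<inter> B))
      + 2 * int (card (A \<inter> (B \<inter> C)))"
    using assms by (simp add: sum.distrib sum_subtractf sum_distrib_left[symmetric] sum_bool_card sum_bool_card2)
  finally show ?thesis unfolding eq by (simp add: algebra_simps Int_assoc)
qed


definition Inb :: "nat \<Rightarrow> nat \<Rightarrow> nat \<Rightarrow> nat \<Rightarrow> nat \<Rightarrow> nat \<Rightarrow> nat \<Rightarrow> nat set" where
  "Inb a b c d e f j = {i. i < a+b+c+d+e+f \<and> j \<in> bic_nbrs a b c d e f i}"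

lemma Inb0: "Inb a b c d e f 0 = {0..<a} \<union> {a+b+c+d..<a+b+c+d+e+f}"
  by (auto simp: Inb_def bic_nbrs_def split: if_splits)
lemma Inb1: "Inb a b c d e f 1 = ({a..<a+b} \<union> {a+b+c..<a+b+c+d}) \<union> {a+b+c+d+e..<a+b+c+d+e+f}"
  by (auto simp: Inb_def bic_nbrs_def split: if_splits)
lemma Inb2: "Inb a b c d e f 2 = {a+b..<a+b+c+d+e}"
  by (auto simp: Inb_def bic_nbrs_def split: if_splits)

lemma card_two: "(x::nat) \<le> y \<Longrightarrow> y \<le> z \<Longrightarrow> card ({x..<y} \<union> {z..<w}) = (y - x) + (w - z)"
  by (subst card_Un_disjoint) auto

lemma card_three: "(x::nat) \<le> y \<Longrightarrow> y \<le> z \<Longrightarrow> z \<le> w \<Longrightarrow> w \<le> u \<Longrightarrow>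
   card (({x..<y} \<union> {z..<w}) \<union> {u..<v}) = (y - x) + (w - z) + (v - u)"
  by (subst card_Un_disjoint) (auto simp: card_two)

lemma cI0: "card (Inb a b c d e f 0) = a+e+f"
  unfolding Inb0 by (subst card_two) auto
lemma cI1: "card (Inb a b c d e f 1) = b+d+f"
  unfolding Inb1 by (subst card_three) auto
lemma cI2: "card (Inb a b c d e f 2) = c+d+e"
  unfolding Inb2 by simp
lemma cI01: "card (Inb a b c d e f 0 \<union> Inb a b c d e f 1) = a+b+d+e+f"
proof -
  have "Inb a b c d e f 0 \<union> Inb a b c d e f 1 = {0..<a+b} \<union> {a+b+c..<a+b+c+d+e+f}"
    unfolding Inb0 Inb1 by auto
  then show ?thesis by (simp add: card_two)
qed
lemma cI02: "card (Inb a b c d e f 0 \<union> Inb a b c d e f 2) = a+c+d+e+f"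
proof -
  have "Inb a b c d e f 0 \<union> Inb a b c d e f 2 = {0..<a} \<union> {a+b..<a+b+c+d+e+f}"
    unfolding Inb0 Inb2 by auto
  then show ?thesis by (simp add: card_two)
qed
lemma cI12: "card (Inb a b c d e f 1 \<union> Inb a b c d e f 2) = b+c+d+e+f"
proof -
  have "Inb a b c d e f 1 \<union> Inb a b c d e f 2 = {a..<a+b+c+d+e+f}"
    unfolding Inb1 Inb2 by auto
  then show ?thesis by simp
qed
lemma cI012: "(Inb a b c d e f 0 \<union> Inb a b c d e f 1) \<union> Inb a b c d e f 2 = {0..<a+b+c+d+e+f}"
  unfolding Inb0 Inb1 Inb2 by auto
lemma Inb_sub: "Inb a b c d e f j \<subseteq> {0..<a+b+c+d+e+f}"
  by (auto simp: Inb_def)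

lemma proper_iff:
  fixes a b c d e f :: nat and cc :: "nat \<Rightarrow> nat"
  shows "(\<forall>x\<in>{0..<a+b+c+d+e+f+3}. \<forall>y\<in>{0..<a+b+c+d+e+f+3}. bic_adj a b c d e f x y \<longrightarrow> cc x \<noteq> cc y) \<longleftrightarrow>
    (inj_on (\<lambda>i. cc (i+3)) {0..<a+b+c+d+e+f} \<and> cc 0 \<noteq> cc 1 \<and> cc 0 \<noteq> cc 2 \<and> cc 1 \<noteq> cc 2 \<and>
     (\<forall>j<3. \<forall>i\<in>Inb a b c d e f j. cc j \<noteq> cc (i+3)))"
  (is "?L \<longleftrightarrow> ?R")
proof
  assume L: ?L
  have "inj_on (\<lambda>i. cc (i+3)) {0..<a+b+c+d+e+f}"
  proof (rule inj_onI, rule ccontr)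
    fix i i' assume "i \<in> {0..<a+b+c+d+e+f}" "i' \<in> {0..<a+b+c+d+e+f}" "cc (i+3) = cc (i'+3)" "i \<noteq> i'"
    then show False using L[rule_format, of "i+3" "i'+3"] by (auto simp: bic_adj_def)
  qed
  moreover have "cc 0 \<noteq> cc 1" "cc 0 \<noteq> cc 2" "cc 1 \<noteq> cc 2"
    using L[rule_format, of 0 1] L[rule_format, of 0 2] L[rule_format, of 1 2] by (auto simp: bic_adj_def)
  moreover have "\<forall>j<3. \<forall>i\<in>Inb a b c d e f j. cc j \<noteq> cc (i+3)"
  proof (intro allI impI ballI)
    fix j i assume "j < (3::nat)" "i \<in> Inb a b c d e f j"
    then show "cc j \<noteq> cc (i+3)" using L[rule_format, of j "i+3"] by (auto simp: bic_adj_def Inb_def)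
  qed
  ultimately show ?R by blast
next
  assume R: ?R
  show ?L
  proof (intro ballI impI)
    fix x y assume x: "x \<in> {0..<a+b+c+d+e+f+3}" and y: "y \<in> {0..<a+b+c+d+e+f+3}"
      and adj: "bic_adj a b c d e f x y"
    from adj have ne: "x \<noteq> y" by (simp add: bic_adj_def)
    from adj consider "x < 3" "y < 3" | "3 \<le> x" "3 \<le> y"
      | "x < 3" "3 \<le> y" "x \<in> bic_nbrs a b c d e f (y - 3)"
      | "y < 3" "3 \<le> x" "y \<in> bic_nbrs a b c d e f (x - 3)"
      unfolding bic_adj_def by blast
    then show "cc x \<noteq> cc y"
    proof cases
      case 1
      then have "x = 0 \<or> x = 1 \<or> x = 2" "y = 0 \<or> y = 1 \<or> y = 2" by auto
      then show ?thesis using R ne by auto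
    next
      case 2
      have "x - 3 \<in> {0..<a+b+c+d+e+f}" "y - 3 \<in> {0..<a+b+c+d+e+f}" "x - 3 \<noteq> y - 3"
        using 2 x y ne by auto
      then have "cc (x-3+3) \<noteq> cc (y-3+3)" using R inj_on_eq_iff by (metis (no_types, lifting))
      then show ?thesis using 2 by simp
    next
      case 3
      then have "y - 3 \<in> Inb a b c d e f x" using y by (auto simp: Inb_def)
      then have "cc x \<noteq> cc (y-3+3)" using R 3 by blast
      then show ?thesis using 3 by simp
    next
      case 4
      then have "x - 3 \<in> Inb a b c d e f y" using x by (auto simp: Inb_def)
      then have "cc y \<noteq> cc (x-3+3)" using R 4 by blast
      then show ?thesis using 4 by simp
    qed
  qed
qed


definition gp :: "nat \<Rightarrow> nat \<Rightarrow> nat \<Rightarrow> nat \<Rightarrow> nat \<Rightarrow> nat \<Rightarrow> real poly" where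
  "gp a b c d e f =
     [:- real (a+e+f), 1:] * [:- real (b+d+f), 1:] * [:- real (c+d+e), 1:]
     - [:real c - real (a+b+c+d+e+f), 1:] * [:- real (c+d+e), 1:]
     - [:real b - real (a+b+c+d+e+f), 1:] * [:- real (b+d+f), 1:]
     - [:real a - real (a+b+c+d+e+f), 1:] * [:- real (a+e+f), 1:]
     + [:- 2 * real (a+b+c+d+e+f), 2:]"

lemma count:
  fixes a b c d e f n :: nat
  defines "k \<equiv> a+b+c+d+e+f"
  shows "real (num_colorings (bic_verts a b c d e f) (bic_adj a b c d e f) n)
     = real (\<Prod>i\<in>{0..<k}. n - i) * poly (gp a b c d e f) (real n)"
proof -
  define V where "V = {0..<k+3}"
  define adj where "adj = bic_adj a b c d e f"
  define I where "I = Inb a b c d e f"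
  define Col where "Col = {cc \<in> V \<rightarrow>\<^sub>E {0..<n}. \<forall>x\<in>V. \<forall>y\<in>V. adj x y \<longrightarrow> cc x \<noteq> cc y}"
  define F where "F = {\<phi> \<in> {0..<k} \<rightarrow>\<^sub>E {0..<n}. inj_on \<phi> {0..<k}}"
  define T where "T = (\<lambda>\<phi>::nat\<Rightarrow>nat. {(p,q,w). p \<in> {0..<n} - \<phi>`I 0 \<and> q \<in> {0..<n} - \<phi>`I 1
      \<and> w \<in> {0..<n} - \<phi>`I 2 \<and> p\<noteq>q \<and> p\<noteq>w \<and> q\<noteq>w})"
  define h where "h = (\<lambda>(\<phi>::nat\<Rightarrow>nat,(p::nat,q::nat,w::nat)).
      (\<lambda>x::nat. if x=0 then p else if x=1 then q else if x=2 then w else \<phi> (x-3)))"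
  have hsimp: "h (\<phi>,(p,q,w)) = (\<lambda>x. if x=0 then p else if x=1 then q else if x=2 then w else \<phi> (x-3))"
    for \<phi> p q w by (simp add: h_def)
  have numc: "num_colorings (bic_verts a b c d e f) (bic_adj a b c d e f) n = card Col"
    by (simp add: num_colorings_def Col_def V_def adj_def bic_verts_def k_def)
  have proper: "(\<forall>x\<in>V. \<forall>y\<in>V. adj x y \<longrightarrow> cc x \<noteq> cc y) \<longleftrightarrow>
    (inj_on (\<lambda>i. cc (i+3)) {0..<k} \<and> cc 0 \<noteq> cc 1 \<and> cc 0 \<noteq> cc 2 \<and> cc 1 \<noteq> cc 2 \<and>
     (\<forall>j<3. \<forall>i\<in>I j. cc j \<noteq> cc (i+3)))" for cc :: "nat \<Rightarrow> nat"
    unfolding V_def adj_def I_def k_def by (rule proper_iff)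
  have Isub: "I j \<subseteq> {0..<k}" for j unfolding I_def k_def by (rule Inb_sub)
  have inj: "inj_on h (Sigma F T)"
  proof (rule inj_onI)
    fix X Y assume X: "X \<in> Sigma F T" and Y: "Y \<in> Sigma F T" and e: "h X = h Y"
    obtain \<phi> p q w where XX: "X = (\<phi>,(p,q,w))" by (cases X) auto
    obtain \<psi> p' q' w' where YY: "Y = (\<psi>,(p',q',w'))" by (cases Y) auto
    from e have e': "\<And>x. h X x = h Y x" by simp
    have "p = p'" using e'[of 0] by (simp add: XX YY hsimp)
    moreover have "q = q'" using e'[of 1] by (simp add: XX YY hsimp)
    moreover have "w = w'" using e'[of 2] by (simp add: XX YY hsimp)
    moreover have "\<phi> = \<psi>"
    proof (rule extensionalityI[of _ "{0..<k}"])
      show "\<phi> \<in> extensional {0..<k}" using X XX by (auto simp: F_def PiE_iff)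
      show "\<psi> \<in> extensional {0..<k}" using Y YY by (auto simp: F_def PiE_iff)
      fix i assume "i \<in> {0..<k}"
      show "\<phi> i = \<psi> i" using e'[of "i+3"] by (simp add: XX YY hsimp)
    qed
    ultimately show "X = Y" using XX YY by simp
  qed
  have img: "h ` Sigma F T = Col"
  proof
    show "h ` Sigma F T \<subseteq> Col"
    proof (rule image_subsetI)
      fix X assume X: "X \<in> Sigma F T"
      obtain \<phi> p q w where XX: "X = (\<phi>,(p,q,w))" by (cases X) auto
      have \<phi>F: "\<phi> \<in> F" and pT: "(p,q,w) \<in> T \<phi>" using X XX by auto
      define cc where "cc = h X"
      have c0: "cc 0 = p" "cc 1 = q" "cc 2 = w" and c3: "(\<lambda>i. cc (i+3)) = \<phi>"
        by (auto simp: cc_def XX hsimp)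
      have \<phi>P: "\<phi> \<in> {0..<k} \<rightarrow>\<^sub>E {0..<n}" "inj_on \<phi> {0..<k}" using \<phi>F by (auto simp: F_def)
      have "cc \<in> V \<rightarrow>\<^sub>E {0..<n}"
      proof (unfold PiE_iff, intro conjI ballI)
        fix x assume "x \<in> V"
        then show "cc x \<in> {0..<n}" using pT \<phi>P(1)
          by (auto simp: cc_def XX hsimp T_def V_def PiE_iff)
      next
        show "cc \<in> extensional V"
        unfolding extensional_def
        proof (intro CollectI allI impI)
          fix x assume "x \<notin> V"
          then have "x \<ge> k+3" by (simp add: V_def)
          then show "cc x = undefined" using \<phi>P(1) by (auto simp: cc_def XX hsimp PiE_iff extensional_def)
        qed
      qed
      moreover have "\<forall>x\<in>V. \<forall>y\<in>V. adj x y \<longrightarrow> cc x \<noteq> cc y"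
      proof -
        have c3': "cc (i+3) = \<phi> i" for i by (simp add: cc_def XX hsimp)
        have "cc j \<noteq> cc (i+3)" if "j < 3" "i \<in> I j" for j i
        proof -
          from that(1) have "j = 0 \<or> j = 1 \<or> j = 2" by auto
          then show ?thesis using pT c0 c3' that(2) by (auto simp: T_def)
        qed
        moreover have "p \<noteq> q" "p \<noteq> w" "q \<noteq> w" using pT by (auto simp: T_def)
        ultimately show ?thesis unfolding proper c3 using \<phi>P(2) c0 by auto
      qed
      ultimately show "h X \<in> Col" by (simp add: Col_def cc_def)
    qed
  next
    show "Col \<subseteq> h ` Sigma F T"
    proof
      fix cc assume cc: "cc \<in> Col"
      then have ccP: "cc \<in> V \<rightarrow>\<^sub>E {0..<n}" and ccp: "\<forall>x\<in>V. \<forall>y\<in>V. adj x y \<longrightarrow> cc x \<noteq> cc y"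
        by (auto simp: Col_def)
      note pr = ccp[unfolded proper]
      define \<phi> where "\<phi> = restrict (\<lambda>i. cc (i+3)) {0..<k}"
      have "\<phi> \<in> F"
      proof -
        have "\<phi> \<in> {0..<k} \<rightarrow>\<^sub>E {0..<n}" using ccP by (auto simp: \<phi>_def V_def PiE_iff)
        moreover have "inj_on \<phi> {0..<k}" using pr inj_on_cong[of "{0..<k}" \<phi> "\<lambda>i. cc (i+3)"]
          by (simp add: \<phi>_def)
        ultimately show ?thesis by (simp add: F_def)
      qed
      moreover have "(cc 0, cc 1, cc 2) \<in> T \<phi>"
      proof -
        have v: "cc 0 \<in> {0..<n}" "cc 1 \<in> {0..<n}" "cc 2 \<in> {0..<n}"
          using ccP by (auto simp: V_def PiE_iff)
        have "cc j \<notin> \<phi> ` I j" if "j < 3" for j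
        proof
          assume "cc j \<in> \<phi> ` I j"
          then obtain i where "i \<in> I j" "cc j = \<phi> i" by auto
          moreover from this(1) have "i < k" using Isub[of j] by auto
          then have "\<phi> i = cc (i+3)" by (simp add: \<phi>_def)
          ultimately show False using pr that by auto
        qed
        then show ?thesis using v pr by (auto simp: T_def)
      qed
      moreover have "h (\<phi>, (cc 0, cc 1, cc 2)) = cc"
      proof
        fix x
        show "h (\<phi>, (cc 0, cc 1, cc 2)) x = cc x"
        proof (cases "x < 3")
          case True
          then have "x = 0 \<or> x = 1 \<or> x = 2" by auto
          then show ?thesis by (auto simp: hsimp)
        next
          case False
          show ?thesis
          proof (cases "x < k+3")
            case True
            then show ?thesis using False by (auto simp: hsimp \<phi>_def)
          next
            case False2: False
            then have "cc x = undefined" using ccP by (auto simp: PiE_iff V_def extensional_def)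
            then show ?thesis using False False2 by (auto simp: hsimp \<phi>_def)
          qed
        qed
      qed
      ultimately show "cc \<in> h ` Sigma F T" by (metis SigmaI rev_image_eqI)
    qed
  qed
  have finF: "finite F" by (rule finite_subset[of _ "{0..<k} \<rightarrow>\<^sub>E {0..<n}"]) (auto simp: F_def finite_PiE)
  have finT: "finite (T \<phi>)" for \<phi>
    by (rule finite_subset[of _ "{0..<n} \<times> {0..<n} \<times> {0..<n}"]) (auto simp: T_def)
  have cardF: "card F = (\<Prod>i\<in>{0..<k}. n - i)"
    using card_inj_on_subset_funcset[of "{0..<k}" "{0..<n}" "{0..<k}"] by (simp add: F_def)
  have Tcard: "real (card (T \<phi>)) = poly (gp a b c d e f) (real n)" if \<phi>: "\<phi> \<in> F" for \<phi>
  proof -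
    have inj: "inj_on \<phi> {0..<k}" and fs: "\<phi> \<in> {0..<k} \<rightarrow> {0..<n}" using \<phi> by (auto simp: F_def PiE_iff)
    have kn: "k \<le> n" using card_inj[OF fs inj] by simp
    have cS: "int (card ({0..<n} - \<phi> ` S)) = int n - int (card S)" if S: "S \<subseteq> {0..<k}" for S
    proof -
      have sub: "\<phi> ` S \<subseteq> {0..<n}" using fs S by auto
      moreover have ci: "card (\<phi> ` S) = card S" using inj_on_subset[OF inj S] card_image by blast
      moreover have "card S \<le> k" using S card_mono[of "{0..<k}" S] by simp
      ultimately show ?thesis using kn
        by (simp add: card_Diff_subset finite_subset[OF sub] of_nat_diff)
    qed
    have setI: "({0..<n} - \<phi>`X) \<inter> ({0..<n} - \<phi>`Y) = {0..<n} - \<phi>`(X \<union> Y)" for X Y by auto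
    have U: "I 0 \<union> I 1 \<subseteq> {0..<k}" "I 0 \<union> I 2 \<subseteq> {0..<k}" "I 1 \<union> I 2 \<subseteq> {0..<k}"
      "I 0 \<union> I 1 \<union> I 2 \<subseteq> {0..<k}" using Isub by auto
    have "int (card (T \<phi>)) =
      (int n - int (a+e+f)) * (int n - int (b+d+f)) * (int n - int (c+d+e))
      - (int n - int (a+b+d+e+f)) * (int n - int (c+d+e))
      - (int n - int (a+c+d+e+f)) * (int n - int (b+d+f))
      - (int n - int (b+c+d+e+f)) * (int n - int (a+e+f))
      + 2 * (int n - int k)"
    proof -
      define A where "A j = {0..<n} - \<phi>`I j" for j
      have Teq: "T \<phi> = {(p,q,w). p\<in>A 0 \<and> q\<in>A 1 \<and> w\<in>A 2 \<and> p\<noteq>q \<and> p\<noteq>w \<and> q\<noteq>w}"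
        by (simp add: T_def A_def)
      have ct: "int (card (T \<phi>)) =
        int (card (A 0)) * int (card (A 1)) * int (card (A 2)) - int (card (A 0\<inter>A 1)) * int (card (A 2))
        - int (card (A 0\<inter>A 2)) * int (card (A 1)) - int (card (A 1\<inter>A 2)) * int (card (A 0))
        + 2 * int (card (A 0\<inter>A 1\<inter>A 2))"
        unfolding Teq by (rule card_triples) (simp_all add: A_def)
      have e0: "int (card (A 0)) = int n - int (a+e+f)"
        using cS[OF Isub[of 0]] cI0 by (simp add: A_def I_def)
      have e1: "int (card (A 1)) = int n - int (b+d+f)"
        using cS[OF Isub[of 1]] cI1 by (simp add: A_def I_def)
      have e2: "int (card (A 2)) = int n - int (c+d+e)"
        using cS[OF Isub[of 2]] cI2 by (simp add: A_def I_def)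
      have "A 0 \<inter> A 1 = {0..<n} - \<phi>`(I 0 \<union> I 1)" by (auto simp: A_def)
      then have e01: "int (card (A 0 \<inter> A 1)) = int n - int (a+b+d+e+f)"
        using cS[OF U(1)] cI01 by (simp add: I_def)
      have "A 0 \<inter> A 2 = {0..<n} - \<phi>`(I 0 \<union> I 2)" by (auto simp: A_def)
      then have e02: "int (card (A 0 \<inter> A 2)) = int n - int (a+c+d+e+f)"
        using cS[OF U(2)] cI02 by (simp add: I_def)
      have "A 1 \<inter> A 2 = {0..<n} - \<phi>`(I 1 \<union> I 2)" by (auto simp: A_def)
      then have e12: "int (card (A 1 \<inter> A 2)) = int n - int (b+c+d+e+f)"
        using cS[OF U(3)] cI12 by (simp add: I_def)
      have "A 0 \<inter> A 1 \<inter> A 2 = {0..<n} - \<phi>`(I 0 \<union> I 1 \<union> I 2)" by (auto simp: A_def)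
      then have e012: "int (card (A 0 \<inter> A 1 \<inter> A 2)) = int n - int k"
        using cS[OF U(4)] cI012 by (simp add: I_def k_def)
      show ?thesis unfolding ct e0 e1 e2 e01 e02 e12 e012 by (simp add: mult.commute)
    qed
    then have "real_of_int (int (card (T \<phi>))) = real_of_int (
      (int n - int (a+e+f)) * (int n - int (b+d+f)) * (int n - int (c+d+e))
      - (int n - int (a+b+d+e+f)) * (int n - int (c+d+e))
      - (int n - int (a+c+d+e+f)) * (int n - int (b+d+f))
      - (int n - int (b+c+d+e+f)) * (int n - int (a+e+f))
      + 2 * (int n - int k))" by simp
    then show ?thesis by (simp add: gp_def k_def algebra_simps)
  qed
  have "real (card Col) = real (card (Sigma F T))" using card_image[OF inj] img by simp
  also have "\<dots> = (\<Sum>\<phi>\<in>F. real (card (T \<phi>)))" using finF finT by simp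
  also have "\<dots> = (\<Sum>\<phi>\<in>F. poly (gp a b c d e f) (real n))" using Tcard by simp
  also have "\<dots> = real (card F) * poly (gp a b c d e f) (real n)" by simp
  finally show ?thesis using numc cardF by simp
qed


lemma falling_eval: "poly (falling_poly k) (real n) = real (\<Prod>i\<in>{0..<k}. n - i)"
proof (cases "k \<le> n")
  case True
  have "poly (falling_poly k) (real n) = (\<Prod>i<k. real n - real i)"
    by (simp add: falling_poly_def poly_prod)
  also have "\<dots> = (\<Prod>i\<in>{0..<k}. real (n - i))"
    using True by (auto simp: atLeast0LessThan of_nat_diff intro!: prod.cong)
  finally show ?thesis by simp
next
  case False
  then have "n \<in> {0..<k}" by simp
  then have z: "(\<Prod>i\<in>{0..<k}. n - i) = 0" by (metis diff_self_eq_0 finite_atLeastLessThan prod_zero_iff)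
  have "poly (falling_poly k) (real n) = (\<Prod>i<k. real n - real i)"
    by (simp add: falling_poly_def poly_prod)
  also have "\<dots> = 0" using False by (auto intro!: prod_zero bexI[of _ n])
  finally show ?thesis using z by simp
qed

lemma chrom_eq:
  assumes "\<forall>n::nat. poly p (real n) = real (num_colorings V adj n)"
  shows "chrom_poly V adj = p"
  unfolding chrom_poly_def
proof (rule the_equality)
  show "\<forall>n::nat. poly p (real n) = real (num_colorings V adj n)" by fact
  fix q assume q: "\<forall>n::nat. poly q (real n) = real (num_colorings V adj n)"
  show "q = p"
  proof (rule ccontr)
    assume "q \<noteq> p"
    then have "q - p \<noteq> 0" by simp
    then have fin: "finite {x. poly (q - p) x = 0}" by (rule poly_roots_finite)
    have "range real \<subseteq> {x. poly (q - p) x = 0}" using q assms by auto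
    then have "finite (range (real :: nat \<Rightarrow> real))" using fin finite_subset by blast
    then show False using finite_imageD[of real "UNIV :: nat set"] inj_on_def by auto
  qed
qed

lemma falling_nz: "falling_poly k \<noteq> 0"
  unfolding falling_poly_def by (auto simp: prod_zero_iff)

lemma interesting_gp: "interesting_factor a b c d e f = gp a b c d e f"
proof -
  have "chrom_poly (bic_verts a b c d e f) (bic_adj a b c d e f) = falling_poly (a+b+c+d+e+f) * gp a b c d e f"
    by (rule chrom_eq) (simp add: count falling_eval)
  then show ?thesis unfolding interesting_factor_def using falling_nz
    by (simp add: nonzero_mult_div_cancel_left)
qed

theorem mainTheorem8:
  fixes r s t u v :: nat
  assumes "r + s \<ge> 1"
    and "int u + int v = 4 * int t - 2 * int r + 4"
  shows "\<forall>x::real.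
    poly (interesting_factor r (r + s - 1) t t (s + t) u) x =
    - poly (interesting_factor r (r + s - 1) t t (s + t) v)
           (- x + 2 * real s + 6 * real t + 4)"
proof
  fix x :: real
  have v: "real v = 4 * real t - 2 * real r + 4 - real u"
    using arg_cong[OF assms(2), of real_of_int] by simp
  define m where "m = r + s - 1"
  have b: "real m = real r + real s - 1" using assms(1) by (simp add: of_nat_diff m_def)
  show "poly (interesting_factor r (r + s - 1) t t (s + t) u) x =
    - poly (interesting_factor r (r + s - 1) t t (s + t) v)
           (- x + 2 * real s + 6 * real t + 4)"
    unfolding interesting_gp gp_def m_def[symmetric]
    by (simp add: v b algebra_simps)
qed

end
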